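(* Let $s$ and $n$ be positive integers, let $f:\mathbb{N}\to\mathbb{C}$ be an arithmetical function, and let $f'(k)=\sum_{d\mid k}\mu(d)f(k/d)$. If $$\sum_{q=1}^{\infty}\sum_{m=1}^{\infty}\frac{|f'(mq)|}{(mq)^s}\,\bigl|c_q^{(s)}(n^s)\bigr|<\infty,$$ then $$\sum_{k=1}^{\infty}2^{\omega(k)}\frac{|f'(k)|}{k^s}<\infty .$$
   Context: For positive integers $a,b,s$, the generalized gcd $(a,b)_s$ is the largest $d^s$ ($d\in\mathbb{N}$) such that $d^s\mid a$ and $d^s\mid b$. The Cohen–Ramanujan sum is defined for positive integers $q,n,s$ by $$c_q^{(s)}(n)=\sum_{\substack{h=1\\ (h,q^s)_s=1}}^{q^s} e^{2\pi i n h/q^s}.$$ $\mu$ is the Möbius function and $\omega(k)$ is the number of distinct prime divisors of $k$. *)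

theory Defs
  imports "HOL-Analysis.Analysis" "HOL-Computational_Algebra.Computational_Algebra"
begin

definition gen_gcd :: "nat \<Rightarrow> nat \<Rightarrow> nat \<Rightarrow> nat" where
  "gen_gcd s a b = (GREATEST e. \<exists>d. e = d ^ s \<and> d ^ s dvd a \<and> d ^ s dvd b)"

definition cohen_ramanujan :: "nat \<Rightarrow> nat \<Rightarrow> nat \<Rightarrow> complex" where
  "cohen_ramanujan s q n =
     (\<Sum>h\<in>{h\<in>{1..q ^ s}. gen_gcd s h (q ^ s) = 1}.
        exp (2 * of_real pi * \<i> * of_nat n * of_nat h / of_nat (q ^ s)))"

definition moebius :: "nat \<Rightarrow> int" where
  "moebius k = (if squarefree k then (-1) ^ card (prime_factors k) else 0)"

definition omega :: "nat \<Rightarrow> nat" where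
  "omega k = card (prime_factors k)"

definition fprime :: "(nat \<Rightarrow> complex) \<Rightarrow> nat \<Rightarrow> complex" where
  "fprime f k = (\<Sum>d | d dvd k. of_int (moebius d) * f (k div d))"

end

theory Submission
  imports Defs
begin

definition ee :: "nat \<Rightarrow> nat \<Rightarrow> nat \<Rightarrow> complex" where
  "ee N m h = exp (2 * of_real pi * \<i> * of_nat m * of_nat h / of_nat N)"

lemma exp_int_one: "exp (2 * of_real pi * \<i> * of_nat k) = (1::complex)"
  by (simp add: exp_eq_1) (metis mult.commute mult_2 of_int_of_nat_eq of_int_add times_divide_eq_left)

lemma geo0:
  assumes "N > 0" "\<not> N dvd m"
  shows "(\<Sum>h\<in>{1..N}. ee N m h) = 0"
proof -
  define z where "z = exp (2 * of_real pi * \<i> * of_nat m / of_nat N)"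
  have eh: "ee N m h = z ^ h" for h
  proof -
    have "2 * of_real pi * \<i> * of_nat m * of_nat h / of_nat N
          = of_nat h * (2 * of_real pi * \<i> * of_nat m / (of_nat N::complex))" by simp
    then show ?thesis unfolding ee_def z_def by (simp only: exp_of_nat_mult)
  qed
  have zN: "z ^ N = 1"
  proof -
    have "z ^ N = exp (of_nat N * (2 * of_real pi * \<i> * of_nat m / of_nat N))"
      unfolding z_def by (simp only: exp_of_nat_mult)
    also have "\<dots> = exp (2 * of_real pi * \<i> * of_nat m)" using assms(1) by simp
    finally show ?thesis using exp_int_one by simp
  qed
  have z1: "z \<noteq> 1"
  proof
    assume "z = 1"
    then obtain k :: int where k: "Im (2 * of_real pi * \<i> * of_nat m / of_nat N) = of_int (2*k) * pi"
      unfolding z_def exp_eq_1 by blast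
    have "Im (2 * of_real pi * \<i> * of_nat m / (of_nat N :: complex)) = 2 * pi * m / N"
      by (simp add: Im_divide_of_nat)
    with k have "2 * pi * m / N = 2 * k * pi" by simp
    then have "real m = real_of_int k * N" using assms(1) by (simp add: field_simps)
    then have "int m = k * int N" by (metis of_int_eq_iff of_int_mult of_int_of_nat_eq)
    then have "int N dvd int m" by simp
    then show False using assms(2) by simp
  qed
  have "(1 - z) * (\<Sum>h\<in>{1..N}. z ^ h) = z ^ 1 - z ^ Suc N"
    using assms(1) by (intro sum_gp_multiplied) simp
  also have "\<dots> = 0" using zN by simp
  finally have "(\<Sum>h\<in>{1..N}. z ^ h) = 0" using z1 by simp
  then show ?thesis by (simp add: eh)
qed

definition TT :: "nat \<Rightarrow> nat set \<Rightarrow> nat \<Rightarrow> nat \<Rightarrow> complex" where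
  "TT s P N m = (\<Sum>h\<in>{h\<in>{1..N}. \<forall>p\<in>P. \<not> p ^ s dvd h}. ee N m h)"

lemma TT_empty: "TT s {} N m = (\<Sum>h\<in>{1..N}. ee N m h)"
proof -
  have "{h\<in>{1..N}. \<forall>p\<in>{}. \<not> p ^ s dvd h} = {1..N}" by auto
  then show ?thesis unfolding TT_def by simp
qed

lemma TT_step:
  assumes "finite P" "p \<notin> P" "prime p" "\<forall>q\<in>P. prime q" "p ^ s dvd N" "N > 0" "s > 0"
  shows "TT s (insert p P) N m = TT s P N m - TT s P (N div p ^ s) m"
proof -
  define A where "A = {h\<in>{1..N}. \<forall>q\<in>P. \<not> q ^ s dvd h}"
  define A' where "A' = {j\<in>{1..N div p ^ s}. \<forall>q\<in>P. \<not> q ^ s dvd j}"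
  obtain K where K: "N = p ^ s * K" using assms(5) by blast
  have ps: "p ^ s > 0" using assms(3) prime_gt_0_nat by simp
  have NK: "N div p ^ s = K" using K ps by simp
  have eq1: "{h\<in>{1..N}. \<forall>q\<in>insert p P. \<not> q ^ s dvd h} = A - {h\<in>A. p ^ s dvd h}"
    unfolding A_def by auto
  have cop: "\<not> q ^ s dvd p ^ s * j \<longleftrightarrow> \<not> q ^ s dvd j" if "q \<in> P" for q j
  proof -
    have "q \<noteq> p" using that assms(2) by auto
    then have "coprime q p" using primes_coprime assms(3,4) that by blast
    then have "coprime (q ^ s) (p ^ s)" by simp
    then show ?thesis by (simp add: coprime_dvd_mult_right_iff)
  qed
  have img: "{h\<in>A. p ^ s dvd h} = (\<lambda>j. p ^ s * j) ` A'"
  proof (rule set_eqI, rule iffI)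
    fix h assume h: "h \<in> {h\<in>A. p ^ s dvd h}"
    then obtain j where j: "h = p ^ s * j" by blast
    have "j \<ge> 1" using h j unfolding A_def by (cases j) auto
    moreover have "j \<le> K" using h j K ps unfolding A_def by auto
    moreover have "\<forall>q\<in>P. \<not> q ^ s dvd j" using h j cop unfolding A_def by auto
    ultimately have "j \<in> A'" unfolding A'_def NK by auto
    then show "h \<in> (\<lambda>j. p ^ s * j) ` A'" using j by blast
  next
    fix h assume "h \<in> (\<lambda>j. p ^ s * j) ` A'"
    then obtain j where j: "h = p ^ s * j" "j \<in> A'" by blast
    have "1 \<le> h" using j ps unfolding A'_def by auto
    moreover have "h \<le> N" using j K unfolding A'_def NK by auto
    moreover have "\<forall>q\<in>P. \<not> q ^ s dvd h" using j cop unfolding A'_def by auto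
    ultimately show "h \<in> {h\<in>A. p ^ s dvd h}" unfolding A_def using j by auto
  qed
  have inj: "inj_on (\<lambda>j. p ^ s * j) A'" using ps by (auto intro: inj_onI)
  have ev: "ee N m (p ^ s * j) = ee K m j" for j
  proof -
    have p0: "(of_nat p :: complex) \<noteq> 0" using assms(3) prime_gt_0_nat by simp
    show ?thesis unfolding ee_def K using p0 by (simp add: field_simps)
  qed
  have "TT s (insert p P) N m = sum (ee N m) A - sum (ee N m) {h\<in>A. p ^ s dvd h}"
    unfolding TT_def eq1 by (rule sum_diff) (auto simp: A_def)
  also have "sum (ee N m) {h\<in>A. p ^ s dvd h} = sum (ee K m) A'"
    unfolding img by (simp add: sum.reindex[OF inj] ev)
  finally show ?thesis unfolding TT_def A_def A'_def NK by simp
qed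

lemma TT_val:
  assumes "finite P"
  shows "(\<forall>p\<in>P. prime p \<and> \<not> p dvd m) \<Longrightarrow> (\<Prod>p\<in>P. p ^ s) dvd N \<Longrightarrow> N > 0 \<Longrightarrow> s > 0 \<Longrightarrow>
    TT s P N m = (-1) ^ card P * TT s {} (N div (\<Prod>p\<in>P. p ^ s)) m"
  using assms
proof (induction P arbitrary: N rule: finite_induct)
  case empty
  then show ?case by simp
next
  case (insert x F)
  have prod: "(\<Prod>p\<in>insert x F. p ^ s) = x ^ s * (\<Prod>p\<in>F. p ^ s)"
    using insert by simp
  obtain c where c: "N = x ^ s * (\<Prod>p\<in>F. p ^ s) * c" using insert(5) prod by (metis dvd_def)
  have xs: "x ^ s > 0" using insert(4) prime_gt_0_nat by simp
  have PF: "(\<Prod>p\<in>F. p ^ s) > 0" using insert(4) prime_gt_0_nat by (simp add: prod_pos)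
  have c0: "c > 0" using c insert(6) by (metis gr0I mult_0_right less_irrefl)
  have x0: "x > 0" using insert(4) prime_gt_0_nat by simp
  have Nd: "N div x ^ s = (\<Prod>p\<in>F. p ^ s) * c" using c x0 by (simp add: mult.assoc)
  have step: "TT s (insert x F) N m = TT s F N m - TT s F (N div x ^ s) m"
    by (rule TT_step) (use insert c in auto)
  have IH1: "TT s F N m = (-1) ^ card F * TT s {} (N div (\<Prod>p\<in>F. p ^ s)) m"
    by (rule insert.IH) (use insert c in auto)
  have IH2: "TT s F (N div x ^ s) m = (-1) ^ card F * TT s {} (N div x ^ s div (\<Prod>p\<in>F. p ^ s)) m"
    by (rule insert.IH) (use insert Nd c0 PF in auto)
  have K1: "N div (\<Prod>p\<in>F. p ^ s) = x ^ s * c" using c PF by simp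
  have z: "TT s {} (N div (\<Prod>p\<in>F. p ^ s)) m = 0"
  proof -
    have "\<not> x ^ s * c dvd m"
    proof
      assume "x ^ s * c dvd m"
      then have "x dvd m" using insert(7) by (meson dvd_mult_left dvd_power dvd_trans)
      then show False using insert(4) by simp
    qed
    then show ?thesis unfolding TT_empty K1 using geo0[of "x ^ s * c" m] xs c0 by simp
  qed
  have K2: "N div x ^ s div (\<Prod>p\<in>F. p ^ s) = N div (\<Prod>p\<in>insert x F. p ^ s)"
    using c x0 PF prod by (simp add: div_mult2_eq)
  show ?case using step IH1 IH2 z K2 insert(1,2) by simp
qed

lemma gen_gcd_one_iff:
  assumes "q > 0" "h \<ge> 1" "s > 0"
  shows "gen_gcd s h (q ^ s) = 1 \<longleftrightarrow> (\<forall>p\<in>prime_factors q. \<not> p ^ s dvd h)"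
proof -
  define S where "S = (\<lambda>e. \<exists>d. e = d ^ s \<and> d ^ s dvd h \<and> d ^ s dvd q ^ s)"
  have gg: "gen_gcd s h (q ^ s) = Greatest S" unfolding gen_gcd_def S_def by simp
  have bd: "\<forall>y. S y \<longrightarrow> y \<le> q ^ s"
    using assms(1) unfolding S_def by (auto intro: dvd_imp_le)
  show ?thesis
  proof
    assume G: "gen_gcd s h (q ^ s) = 1"
    show "\<forall>p\<in>prime_factors q. \<not> p ^ s dvd h"
    proof (intro ballI notI)
      fix p assume p: "p \<in> prime_factors q" and d: "p ^ s dvd h"
      have pq: "p dvd q" using p by auto
      have "S (p ^ s)" unfolding S_def using d pq by (auto intro: dvd_power_same)
      then have "p ^ s \<le> 1" using Greatest_le_nat[of S "p ^ s" "q ^ s"] bd gg G by simp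
      moreover have "p \<ge> 2" using p prime_ge_2_nat by auto
      then have "p ^ s \<ge> 2 ^ s" by (simp add: power_mono)
      moreover have "2 ^ s \<ge> (2::nat)" using assms(3)
        by (metis One_nat_def Suc_leI power_increasing power_one_right one_le_numeral)
      ultimately show False by simp
    qed
  next
    assume H: "\<forall>p\<in>prime_factors q. \<not> p ^ s dvd h"
    have "Greatest S = 1"
    proof (rule Greatest_equality)
      show "S 1" unfolding S_def by (rule exI[of _ 1]) simp
    next
      fix y assume "S y"
      then obtain d where d: "y = d ^ s" "d ^ s dvd h" "d ^ s dvd q ^ s" unfolding S_def by blast
      have dq: "d dvd q" using d(3) assms(3) pow_divides_pow_iff by blast
      show "y \<le> 1"
      proof (cases "d = 1")
        case True then show ?thesis using d by simp
      next
        case False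
        then obtain p where p: "prime p" "p dvd d" using prime_factor_nat by blast
        have "p \<in> prime_factors q" using p dq assms(1) by (metis dvd_trans in_prime_factors_iff not_gr0)
        moreover have "p ^ s dvd h" using p d(2) by (meson dvd_power_same dvd_trans)
        ultimately show ?thesis using H by blast
      qed
    qed
    then show "gen_gcd s h (q ^ s) = 1" using gg by simp
  qed
qed

lemma squarefree_prod_pow:
  fixes q :: nat
  assumes "squarefree q"
  shows "(\<Prod>p\<in>prime_factors q. p ^ s) = q ^ s"
proof -
  have q0: "q > 0" using assms not_squarefree_0 by (cases q) auto
  have m1: "multiplicity p q = 1" if "p \<in> prime_factors q" for p
    using assms that q0 squarefree_factorial_semiring' by auto
  have "q = (\<Prod>p\<in>prime_factors q. p ^ multiplicity p q)" using prime_factorization_nat q0 by blast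
  also have "\<dots> = (\<Prod>p\<in>prime_factors q. p)" using m1 by (intro prod.cong) auto
  finally have "q ^ s = (\<Prod>p\<in>prime_factors q. p) ^ s" by simp
  then show ?thesis by (simp add: prod_power_distrib)
qed

lemma cohen_sqfree_coprime:
  assumes "squarefree q" "coprime q n" "s > 0"
  shows "cohen_ramanujan s q (n ^ s) = (-1) ^ card (prime_factors q)"
proof -
  have q0: "q > 0" using assms not_squarefree_0 by (cases q) auto
  let ?P = "prime_factors q"
  have set_eq: "{h\<in>{1..q ^ s}. gen_gcd s h (q ^ s) = 1} = {h\<in>{1..q ^ s}. \<forall>p\<in>?P. \<not> p ^ s dvd h}"
    using gen_gcd_one_iff[OF q0 _ assms(3)] by auto
  have c: "cohen_ramanujan s q (n ^ s) = TT s ?P (q ^ s) (n ^ s)"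
    unfolding cohen_ramanujan_def TT_def ee_def set_eq ..
  have pr: "\<forall>p\<in>?P. prime p \<and> \<not> p dvd n ^ s"
  proof
    fix p assume p: "p \<in> ?P"
    have "\<not> p dvd n"
    proof
      assume "p dvd n"
      moreover have "p dvd q" using p by auto
      ultimately have "p dvd 1" using assms(2) by (metis coprime_common_divisor)
      then show False using p in_prime_factors_imp_prime not_prime_unit by blast
    qed
    then show "prime p \<and> \<not> p dvd n ^ s" using p prime_dvd_power_nat by auto
  qed
  have "TT s ?P (q ^ s) (n ^ s) = (-1) ^ card ?P * TT s {} (q ^ s div (\<Prod>p\<in>?P. p ^ s)) (n ^ s)"
    by (rule TT_val) (use pr squarefree_prod_pow[OF assms(1)] q0 assms(3) in auto)
  also have "q ^ s div (\<Prod>p\<in>?P. p ^ s) = 1" using squarefree_prod_pow[OF assms(1)] q0 by simp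
  also have "TT s {} 1 (n ^ s) = 1" unfolding TT_empty ee_def using exp_int_one[of "n ^ s"] by simp
  finally show ?thesis using c by simp
qed

lemma count_bound:
  fixes k n :: nat
  assumes "k > 0" "n > 0"
  shows "2 ^ omega k \<le> 2 ^ omega n * card {q. q dvd k \<and> squarefree q \<and> coprime q n}"
proof -
  define X where "X = prime_factors k - prime_factors n"
  define B where "B = {q. q dvd k \<and> squarefree q \<and> coprime q n}"
  have finX: "finite X" unfolding X_def by simp
  have finB: "finite B" unfolding B_def
    by (rule finite_subset[OF _ finite_divisors_nat[OF assms(1)]]) auto
  have primeD: "prime p" if "p \<in> X" for p using that unfolding X_def by auto
  have inj: "inj_on (\<lambda>D. \<Prod>D) (Pow X)"
  proof (rule inj_onI)
    fix D1 D2 assume D: "D1 \<in> Pow X" "D2 \<in> Pow X" "\<Prod>D1 = \<Prod>D2"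
    have fin: "finite D1" "finite D2" using D finX by (auto intro: finite_subset)
    have mem: "p \<in> D \<longleftrightarrow> p dvd \<Prod>D" if "D \<in> Pow X" "finite D" "prime p" for p D
    proof -
      have "p dvd \<Prod>D \<longleftrightarrow> (\<exists>x\<in>D. p dvd x)" using prime_dvd_prod_iff[of D p "\<lambda>x. x"] that by simp
      also have "\<dots> \<longleftrightarrow> p \<in> D"
      proof
        assume "\<exists>x\<in>D. p dvd x"
        then obtain x where x: "x \<in> D" "p dvd x" by blast
        have "x \<in> X" using x(1) that(1) by auto
        then have "prime x" by (rule primeD)
        then have "p = x" using primes_dvd_imp_eq[OF that(3) _ x(2)] by simp
        then show "p \<in> D" using x by simp
      next
        assume "p \<in> D" then show "\<exists>x\<in>D. p dvd x" by (intro bexI[of _ p]) auto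
      qed
      finally show ?thesis by (rule HOL.sym)
    qed
    show "D1 = D2"
    proof (rule set_eqI)
      fix p
      show "p \<in> D1 \<longleftrightarrow> p \<in> D2"
      proof -
        have "p \<in> D1 \<Longrightarrow> prime p" "p \<in> D2 \<Longrightarrow> prime p" using D(1,2) primeD by blast+
        then show ?thesis using mem[of D1 p] mem[of D2 p] D(1,2,3) fin by metis
      qed
    qed
  qed
  have img: "(\<lambda>D. \<Prod>D) ` Pow X \<subseteq> B"
  proof
    fix q assume "q \<in> (\<lambda>D. \<Prod>D) ` Pow X"
    then obtain D where D: "D \<subseteq> X" "q = \<Prod>D" by blast
    have finD: "finite D" using D finX by (auto intro: finite_subset)
    have pD: "\<And>p. p \<in> D \<Longrightarrow> prime p \<and> p dvd k \<and> \<not> p dvd n"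
      using D(1) assms unfolding X_def by (auto simp: in_prime_factors_iff)
    have "\<Prod>D dvd \<Prod>(prime_factors k)"
      using D(1) unfolding X_def by (intro prod_dvd_prod_subset) auto
    also have "\<Prod>(prime_factors k) dvd k"
    proof -
      have d: "\<Prod>(prime_factors k) dvd (\<Prod>p\<in>prime_factors k. p ^ multiplicity p k)"
        using assms by (intro prod_dvd_prod) (simp add: prime_factors_multiplicity dvd_power)
      have e: "(\<Prod>p\<in>prime_factors k. p ^ multiplicity p k) = k"
        using prime_factorization_nat[OF assms(1)] by (rule sym)
      show ?thesis using d unfolding e .
    qed
    finally have dk: "q dvd k" using D by simp
    have sq: "squarefree q"
    proof (rule squarefreeI)
      fix x assume x: "x\<^sup>2 dvd q"
      show "x dvd 1"
      proof (rule ccontr)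
        assume "\<not> x dvd 1"
        then have "x \<noteq> 1" by auto
        then obtain p where p: "prime p" "p dvd x" using prime_factor_nat by blast
        then have "p * p dvd q" using x by (metis dvd_trans mult_dvd_mono power2_eq_square)
        then obtain r where r: "q = p * p * r" by blast
        have "p dvd \<Prod>D" using D r by (metis dvd_mult2 dvd_mult_left dvd_refl)
        then have "\<exists>a\<in>D. p dvd a" using prime_dvd_prod_iff[of D p "\<lambda>x. x"] finD p(1) by simp
        then obtain a where a: "a \<in> D" "p dvd a" by blast
        have "prime a" using pD[OF a(1)] by simp
        then have pa: "p = a" using primes_dvd_imp_eq[OF p(1) _ a(2)] by simp
        have "\<Prod>D = a * \<Prod>(D - {a})" using finD a(1) by (simp add: prod.remove)
        then have "p * \<Prod>(D - {a}) = p * (p * r)" using r D(2) pa by (metis mult.assoc)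
        then have "\<Prod>(D - {a}) = p * r" using p(1) prime_gt_0_nat by simp
        then have "p dvd \<Prod>(D - {a})" by simp
        then have "\<exists>b\<in>D - {a}. p dvd b" using prime_dvd_prod_iff[of "D - {a}" p "\<lambda>x. x"] finD p(1) by simp
        then obtain b where b: "b \<in> D - {a}" "p dvd b" by blast
        have "prime b" using pD[of b] b(1) by simp
        then have "p = b" using primes_dvd_imp_eq[OF p(1) _ b(2)] by simp
        then show False using b pa by simp
      qed
    qed
    have cp: "coprime q n" unfolding D(2)
    proof (rule prod_coprime_left)
      fix p assume "p \<in> D"
      then have "prime p" "\<not> p dvd n" using pD by auto
      then show "coprime p n" by (rule prime_imp_coprime)
    qed
    show "q \<in> B" unfolding B_def using dk sq cp by simp
  qed
  have cB: "2 ^ card X \<le> card B"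
    using card_inj_on_le[OF inj img finB] card_Pow[OF finX] by simp
  have "omega k \<le> card X + omega n"
  proof -
    have "prime_factors k \<subseteq> X \<union> prime_factors n" unfolding X_def by auto
    then have "card (prime_factors k) \<le> card (X \<union> prime_factors n)"
      by (intro card_mono) (auto simp: finX)
    also have "\<dots> \<le> card X + card (prime_factors n)" by (rule card_Un_le)
    finally show ?thesis unfolding omega_def .
  qed
  then have "(2::nat) ^ omega k \<le> 2 ^ (card X + omega n)" by (intro power_increasing) auto
  then have "(2::nat) ^ omega k \<le> 2 ^ omega n * 2 ^ card X" by (simp add: power_add mult.commute)
  also have "\<dots> \<le> 2 ^ omega n * card B" using cB by simp
  finally show ?thesis unfolding B_def .
qed

theorem theorem5:
  fixes s n :: nat and f :: "nat \<Rightarrow> complex"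
  assumes "s > 0" and "n > 0"
    and "\<forall>q\<in>{1..}. (\<lambda>m. norm (fprime f (m * q)) / real (m * q) ^ s
                         * norm (cohen_ramanujan s q (n ^ s))) summable_on {1..}"
    and "(\<lambda>q. \<Sum>\<^sub>\<infinity>m\<in>{1..}. norm (fprime f (m * q)) / real (m * q) ^ s
                         * norm (cohen_ramanujan s q (n ^ s))) summable_on {1..}"
  shows "(\<lambda>k. 2 ^ omega k * norm (fprime f k) / real k ^ s) summable_on {1..}"
proof -
  define a where "a k = norm (fprime f k) / real k ^ s" for k
  define Q where "Q = {q. squarefree q \<and> coprime q n}"
  define Bk where "Bk k = {q. q dvd k \<and> q \<in> Q}" for k
  define F where "F = (\<lambda>(q::nat,m::nat). norm (fprime f (m * q)) / real (m * q) ^ s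
                         * norm (cohen_ramanujan s q (n ^ s)))"
  have a_nn: "a k \<ge> 0" for k unfolding a_def by simp
  have S1: "F summable_on Sigma {1..} (\<lambda>_. {1..})"
  proof (rule summable_on_SigmaI[where g = "\<lambda>q. \<Sum>\<^sub>\<infinity>m\<in>{1..}. norm (fprime f (m * q)) / real (m * q) ^ s
                         * norm (cohen_ramanujan s q (n ^ s))"])
    fix q :: nat assume "q \<in> {1..}"
    then show "((\<lambda>m. F (q, m)) has_sum (\<Sum>\<^sub>\<infinity>m\<in>{1..}. norm (fprime f (m * q)) / real (m * q) ^ s
                         * norm (cohen_ramanujan s q (n ^ s)))) {1..}"
      using assms(3) unfolding F_def by (simp add: has_sum_infsum)
  next
    show "(\<lambda>q. \<Sum>\<^sub>\<infinity>m\<in>{1..}. norm (fprime f (m * q)) / real (m * q) ^ s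
                         * norm (cohen_ramanujan s q (n ^ s))) summable_on {1..}" by (rule assms(4))
  next
    fix q m show "0 \<le> F (q, m)" unfolding F_def by simp
  qed
  have S2: "F summable_on Sigma ({1..} \<inter> Q) (\<lambda>_. {1..})"
    by (rule summable_on_subset_banach[OF S1]) auto
  have w1: "norm (cohen_ramanujan s q (n ^ s)) = 1" if "q \<in> Q" for q
    using cohen_sqfree_coprime[of q n s] that assms(1) unfolding Q_def by (simp add: norm_power)
  have S3: "(\<lambda>(k,q). a k) summable_on Sigma {1..} Bk"
  proof -
    define ii :: "nat \<times> nat \<Rightarrow> nat \<times> nat" where "ii = (\<lambda>(k,q). (q, k div q))"
    define jj :: "nat \<times> nat \<Rightarrow> nat \<times> nat" where "jj = (\<lambda>(q,m). (m*q, q))"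
    have "F summable_on Sigma ({1..} \<inter> Q) (\<lambda>_. {1..}) \<longleftrightarrow> (\<lambda>(k,q). a k) summable_on Sigma {1..} Bk"
    proof (rule summable_on_reindex_bij_witness[where i = ii and j = jj])
      fix x :: "nat \<times> nat" assume "x \<in> Sigma ({1..} \<inter> Q) (\<lambda>_. {1..})"
      then obtain q m where x: "x = (q,m)" "q \<ge> 1" "m \<ge> 1" "q \<in> Q" by auto
      show "ii (jj x) = x"
        using x by (simp add: ii_def jj_def)
      show "jj x \<in> Sigma {1..} Bk"
        using x unfolding Bk_def by (simp add: jj_def)
      show "(\<lambda>(k,q). a k) (jj x) = F x"
        using x w1[of q] unfolding F_def a_def by (simp add: jj_def)
    next
      fix y :: "nat \<times> nat" assume "y \<in> Sigma {1..} Bk"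
      then obtain k q where y: "y = (k,q)" "k \<ge> 1" "q dvd k" "q \<in> Q" unfolding Bk_def by auto
      have q0: "q > 0" using y by (metis dvd_0_left_iff gr0I not_one_le_zero)
      have kq: "k div q \<ge> 1" using y q0
        by (metis div_mult_self1_is_m dvd_div_mult_self less_one not_less mult_zero_left)
      show "jj (ii y) = y"
        using y by (simp add: ii_def jj_def)
      show "ii y \<in> Sigma ({1..} \<inter> Q) (\<lambda>_. {1..})"
        using y q0 kq by (auto simp: ii_def)
    qed
    then show ?thesis using S2 by simp
  qed
  have finB: "finite (Bk k)" if "k \<in> {1..}" for k
    by (rule finite_subset[of _ "{d. d dvd k}"]) (use that in \<open>auto simp: Bk_def\<close>)
  have S4: "(\<lambda>k. \<Sum>\<^sub>\<infinity>q\<in>Bk k. a k) summable_on {1..}"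
    using summable_on_SigmaD[OF S3[unfolded case_prod_unfold]] finB by auto
  have S5: "(\<lambda>k. 2 ^ omega n * (\<Sum>\<^sub>\<infinity>q\<in>Bk k. a k)) summable_on {1..}"
    using summable_on_cmult_right[OF S4] .
  show ?thesis
  proof (rule summable_on_comparison_test[OF S5])
    fix k :: nat assume k: "k \<in> {1..}"
    have inf: "(\<Sum>\<^sub>\<infinity>q\<in>Bk k. a k) = real (card (Bk k)) * a k"
      using finB[OF k] by simp
    have cb: "2 ^ omega k \<le> 2 ^ omega n * card (Bk k)"
      using count_bound[of k n] k assms(2) unfolding Bk_def Q_def by simp
    then have "real (2 ^ omega k) \<le> real (2 ^ omega n * card (Bk k))" by (rule of_nat_mono)
    then have "(2::real) ^ omega k \<le> 2 ^ omega n * real (card (Bk k))" by simp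
    then have "(2::real) ^ omega k * a k \<le> 2 ^ omega n * real (card (Bk k)) * a k"
      using a_nn by (rule mult_right_mono)
    then show "2 ^ omega k * norm (fprime f k) / real k ^ s \<le> 2 ^ omega n * (\<Sum>\<^sub>\<infinity>q\<in>Bk k. a k)"
      unfolding inf a_def by simp
    show "0 \<le> 2 ^ omega k * norm (fprime f k) / real k ^ s" by simp
  qed
qed

end
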